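(* Let $K(x,y)=\prod_{i=1}^d K_i(x,y)$ with $K_i(x,y)=h(|x_i-y_i|)$ be a distance-based product kernel on $\mathbb{R}^d$, where $h:[0,\infty)\to\mathbb{R}$ is decreasing with $h(0)=1$ and each $K_i$ is a (positive definite) kernel. Let $X\subset\mathbb{R}^d$ be a finite dataset partitioned into $k$ nonempty clusters $C_1,\dots,C_k$. Let $\mathrm{cost}$ denote the kernel $k$-means cost with respect to $K$ and $\mathrm{cost}_i$ the kernel $k$-means cost with respect to $K_i$ (equivalently, with respect to a feature map $\phi_i$ of $K_i$). Then $$\mathrm{cost}(C_1,\dots,C_k)\le\sum_{i=1}^d\mathrm{cost}_i(C_1,\dots,C_k)\le d\cdot\mathrm{cost}(C_1,\dots,C_k).$$
   Context: For a kernel $\kappa$ with feature map $\psi$ and partition $C_1,\dots,C_k$ of $X$, the kernel $k$-means cost is $\sum_l\sum_{x\in C_l}\|\psi(x)-\frac{1}{|C_l|}\sum_{y\in C_l}\psi(y)\|^2=\sum_{x\in X}\kappa(x,x)-\sum_l\frac{1}{|C_l|}\sum_{x,y\in C_l}\kappa(x,y)$. Here $K_i$ acts on the $i$-th coordinates only. *)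

theory Defs
  imports "HOL-Analysis.Analysis"
begin

definition pd_kernel :: "('a \<Rightarrow> 'a \<Rightarrow> real) \<Rightarrow> bool" where
  "pd_kernel \<kappa> \<longleftrightarrow> (\<forall>x y. \<kappa> x y = \<kappa> y x) \<and>
     (\<forall>(n::nat) (p::nat \<Rightarrow> 'a) (c::nat \<Rightarrow> real).
        (\<Sum>a<n. \<Sum>b<n. c a * c b * \<kappa> (p a) (p b)) \<ge> 0)"

definition kmeans_cost :: "('a \<Rightarrow> 'a \<Rightarrow> real) \<Rightarrow> nat \<Rightarrow> (nat \<Rightarrow> 'a set) \<Rightarrow> real" where
  "kmeans_cost \<kappa> k C =
     (\<Sum>l<k. (\<Sum>x\<in>C l. \<kappa> x x) - (1 / real (card (C l))) * (\<Sum>x\<in>C l. \<Sum>y\<in>C l. \<kappa> x y))"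

definition coord_kernel :: "(real \<Rightarrow> real) \<Rightarrow> 'd \<Rightarrow> real^'d \<Rightarrow> real^'d \<Rightarrow> real" where
  "coord_kernel h i x y = h \<bar>x $ i - y $ i\<bar>"

definition prod_kernel :: "(real \<Rightarrow> real) \<Rightarrow> real^'d::finite \<Rightarrow> real^'d \<Rightarrow> real" where
  "prod_kernel h x y = (\<Prod>i\<in>UNIV. coord_kernel h i x y)"

end

theory Submission
  imports Defs
begin

lemma cost_alt:
  assumes diag: "\<And>x. \<kappa> x x = 1"
  shows "kmeans_cost \<kappa> k C =
    (\<Sum>l<k. (1 / real (card (C l))) * (\<Sum>x\<in>C l. \<Sum>y\<in>C l. 1 - \<kappa> x y))"
  unfolding kmeans_cost_def
proof (rule sum.cong[OF refl])
  fix l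
  let ?S = "C l"
  show "(\<Sum>x\<in>?S. \<kappa> x x) - 1 / real (card ?S) * (\<Sum>x\<in>?S. \<Sum>y\<in>?S. \<kappa> x y) =
        1 / real (card ?S) * (\<Sum>x\<in>?S. \<Sum>y\<in>?S. 1 - \<kappa> x y)"
  proof (cases "card ?S = 0")
    case True
    then show ?thesis by (simp add: diag)
  next
    case False
    have "(\<Sum>x\<in>?S. \<Sum>y\<in>?S. 1 - \<kappa> x y) = real (card ?S) * real (card ?S) - (\<Sum>x\<in>?S. \<Sum>y\<in>?S. \<kappa> x y)"
      by (simp add: sum_subtractf)
    then show ?thesis using False by (simp add: diag field_simps)
  qed
qed

lemma prod_ineq1:
  fixes f :: "'a \<Rightarrow> real"
  assumes "finite I" "\<And>i. i \<in> I \<Longrightarrow> 0 \<le> f i \<and> f i \<le> 1"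
  shows "1 - prod f I \<le> (\<Sum>i\<in>I. 1 - f i)"
  using assms
proof (induction I rule: finite_induct)
  case empty
  then show ?case by simp
next
  case (insert a F)
  have P: "0 \<le> prod f F" "prod f F \<le> 1"
    using insert by (auto intro: prod_nonneg prod_le_1)
  have a: "0 \<le> f a" "f a \<le> 1" using insert by auto
  have IH: "1 - prod f F \<le> (\<Sum>i\<in>F. 1 - f i)" using insert by auto
  have "1 - f a * prod f F \<le> (1 - f a) + (1 - prod f F)"
  proof -
    have "0 \<le> (1 - f a) * (1 - prod f F)" using P a by simp
    then show ?thesis by (simp add: algebra_simps)
  qed
  then show ?case using insert IH by simp
qed

lemma prod_ineq2:
  fixes f :: "'a \<Rightarrow> real"
  assumes "finite I" "\<And>i. i \<in> I \<Longrightarrow> 0 \<le> f i \<and> f i \<le> 1"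
  shows "(\<Sum>i\<in>I. 1 - f i) \<le> real (card I) * (1 - prod f I)"
proof -
  have "\<And>i. i \<in> I \<Longrightarrow> 1 - f i \<le> 1 - prod f I"
  proof -
    fix i assume i: "i \<in> I"
    have "prod f I = f i * prod f (I - {i})"
      using assms(1) i by (simp add: prod.remove)
    moreover have "0 \<le> prod f (I - {i})" "prod f (I - {i}) \<le> 1"
      using assms by (auto intro: prod_nonneg prod_le_1)
    moreover have "0 \<le> f i" using assms i by auto
    ultimately have "prod f I \<le> f i" by (simp add: mult_left_le)
    then show "1 - f i \<le> 1 - prod f I" by simp
  qed
  then have "(\<Sum>i\<in>I. 1 - f i) \<le> (\<Sum>i\<in>I. 1 - prod f I)" by (rule sum_mono)
  then show ?thesis by simp
qed

lemma h_nonneg: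
  fixes h :: "real \<Rightarrow> real"
  assumes h_dec: "\<And>a b. 0 \<le> a \<Longrightarrow> a \<le> b \<Longrightarrow> h b \<le> h a"
    and h0: "h 0 = 1"
    and pd: "pd_kernel (coord_kernel h i :: real^'d::finite \<Rightarrow> real^'d \<Rightarrow> real)"
    and t: "0 \<le> t"
  shows "0 \<le> h t"
proof (rule ccontr)
  assume "\<not> 0 \<le> h t"
  then have neg: "h t < 0" by simp
  then have tpos: "t > 0" using h0 t by (cases "t = 0") auto
  obtain m :: nat where m: "real m > -1 / h t" using reals_Archimedean2 by blast
  define n where "n = Suc m"
  define p :: "nat \<Rightarrow> real^'d" where "p = (\<lambda>a. \<chi> j. real a * t)"
  have off: "coord_kernel h i (p a) (p b) \<le> h t" if "a \<noteq> b" for a b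
  proof -
    have "\<bar>real a * t - real b * t\<bar> = \<bar>real a - real b\<bar> * t"
      using tpos by (simp add: abs_mult left_diff_distrib[symmetric])
    moreover have "\<bar>real a - real b\<bar> \<ge> 1" using that by linarith
    ultimately have "\<bar>real a * t - real b * t\<bar> \<ge> t"
      using tpos mult_right_mono[of 1 "\<bar>real a - real b\<bar>" t] by simp
    then show ?thesis unfolding coord_kernel_def p_def
      using h_dec t by simp
  qed
  have diag: "coord_kernel h i (p a) (p a) = 1" for a
    unfolding coord_kernel_def using h0 by simp
  have row: "(\<Sum>b<n. coord_kernel h i (p a) (p b)) \<le> 1 + real m * h t" if "a < n" for a
  proof -
    have "(\<Sum>b<n. coord_kernel h i (p a) (p b)) =
        coord_kernel h i (p a) (p a) + (\<Sum>b\<in>{..<n} - {a}. coord_kernel h i (p a) (p b))"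
      using that by (simp add: sum.remove)
    also have "(\<Sum>b\<in>{..<n} - {a}. coord_kernel h i (p a) (p b)) \<le> (\<Sum>b\<in>{..<n} - {a}. h t)"
      by (rule sum_mono) (use off in auto)
    also have "(\<Sum>b\<in>{..<n} - {a}. h t) = real m * h t"
      using that by (simp add: n_def)
    finally show ?thesis using diag by simp
  qed
  have "(\<Sum>a<n. \<Sum>b<n. 1 * 1 * coord_kernel h i (p a) (p b)) \<le> (\<Sum>a<n. 1 + real m * h t)"
    using row by (intro sum_mono) simp
  also have "\<dots> = real n * (1 + real m * h t)" by simp
  also have "1 + real m * h t < 0"
  proof -
    have "-1 / h t * h t = -1" using neg by simp
    moreover have "real m * h t < -1 / h t * h t"
      using mult_strict_right_mono_neg[OF m neg] .
    ultimately show ?thesis by linarith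
  qed
  then have "real n * (1 + real m * h t) < 0"
    by (simp add: n_def mult_pos_neg)
  finally have "(\<Sum>a<n. \<Sum>b<n. 1 * 1 * coord_kernel h i (p a) (p b)) < 0" .
  moreover have "(\<Sum>a<n. \<Sum>b<n. 1 * 1 * coord_kernel h i (p a) (p b)) \<ge> 0"
  proof -
    have "\<forall>(n::nat) (p::nat \<Rightarrow> real^'d) (c::nat \<Rightarrow> real).
        (\<Sum>a<n. \<Sum>b<n. c a * c b * coord_kernel h i (p a) (p b)) \<ge> 0"
      using pd unfolding pd_kernel_def by (elim conjE)
    from this[THEN spec[of _ n], THEN spec[of _ p], THEN spec[of _ "\<lambda>_. 1"]] show ?thesis by simp
  qed
  ultimately show False by simp
qed

theorem lemma3:
  fixes h :: "real \<Rightarrow> real" and X :: "(real^'d::finite) set"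
    and C :: "nat \<Rightarrow> (real^'d) set" and k :: nat
  assumes h_dec: "\<And>a b. 0 \<le> a \<Longrightarrow> a \<le> b \<Longrightarrow> h b \<le> h a"
    and h0: "h 0 = 1"
    and pd: "\<And>i. pd_kernel (coord_kernel h i :: real^'d \<Rightarrow> real^'d \<Rightarrow> real)"
    and finX: "finite X"
    and part_cover: "(\<Union>l<k. C l) = X"
    and part_disj: "\<And>l m. l < k \<Longrightarrow> m < k \<Longrightarrow> l \<noteq> m \<Longrightarrow> C l \<inter> C m = {}"
    and part_ne: "\<And>l. l < k \<Longrightarrow> C l \<noteq> {}"
  shows "kmeans_cost (prod_kernel h) k C \<le> (\<Sum>i\<in>UNIV. kmeans_cost (coord_kernel h i) k C)
    \<and> (\<Sum>i\<in>UNIV. kmeans_cost (coord_kernel h i) k C)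
        \<le> real CARD('d) * kmeans_cost (prod_kernel h) k C"
proof -
  let ?a = "\<lambda>x y (i::'d). coord_kernel h i x y"
  have bnd: "0 \<le> ?a x y i \<and> ?a x y i \<le> 1" for x y :: "real^'d" and i
  proof
    show "0 \<le> ?a x y i" unfolding coord_kernel_def
      by (intro h_nonneg[OF h_dec h0 pd] abs_ge_zero)
    show "?a x y i \<le> 1" unfolding coord_kernel_def using h_dec[of 0] h0 by simp
  qed
  have dc: "coord_kernel h i x x = 1" for i x unfolding coord_kernel_def using h0 by simp
  have dp: "prod_kernel h x x = 1" for x unfolding prod_kernel_def by (simp add: dc)
  define w where "w l = 1 / real (card (C l))" for l
  have w: "w l \<ge> 0" for l unfolding w_def by simp
  have E1: "kmeans_cost (prod_kernel h) k C =
     (\<Sum>l<k. w l * (\<Sum>x\<in>C l. \<Sum>y\<in>C l. 1 - prod (?a x y) UNIV))"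
    unfolding cost_alt[OF dp] w_def prod_kernel_def by simp
  have E2: "(\<Sum>i\<in>UNIV. kmeans_cost (coord_kernel h i) k C) =
     (\<Sum>l<k. w l * (\<Sum>x\<in>C l. \<Sum>y\<in>C l. \<Sum>i\<in>UNIV. 1 - ?a x y i))"
  proof -
    have "(\<Sum>i\<in>UNIV. kmeans_cost (coord_kernel h i) k C) =
       (\<Sum>i\<in>UNIV. \<Sum>l<k. w l * (\<Sum>x\<in>C l. \<Sum>y\<in>C l. 1 - ?a x y i))"
      unfolding cost_alt[OF dc] w_def by simp
    also have "\<dots> = (\<Sum>l<k. \<Sum>i\<in>UNIV. w l * (\<Sum>x\<in>C l. \<Sum>y\<in>C l. 1 - ?a x y i))"
      by (rule sum.swap)
    also have "\<dots> = (\<Sum>l<k. w l * (\<Sum>x\<in>C l. \<Sum>y\<in>C l. \<Sum>i\<in>UNIV. 1 - ?a x y i))"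
    proof (rule sum.cong[OF refl])
      fix l
      have "(\<Sum>i\<in>UNIV. \<Sum>x\<in>C l. \<Sum>y\<in>C l. 1 - ?a x y i) = (\<Sum>x\<in>C l. \<Sum>i\<in>UNIV. \<Sum>y\<in>C l. 1 - ?a x y i)"
        by (rule sum.swap)
      also have "\<dots> = (\<Sum>x\<in>C l. \<Sum>y\<in>C l. \<Sum>i\<in>UNIV. 1 - ?a x y i)"
        by (rule sum.cong[OF refl], rule sum.swap)
      finally show "(\<Sum>i\<in>UNIV. w l * (\<Sum>x\<in>C l. \<Sum>y\<in>C l. 1 - ?a x y i)) = w l * (\<Sum>x\<in>C l. \<Sum>y\<in>C l. \<Sum>i\<in>UNIV. 1 - ?a x y i)"
        by (simp only: sum_distrib_left[symmetric])
    qed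
    finally show ?thesis .
  qed
  have E3: "real CARD('d) * kmeans_cost (prod_kernel h) k C =
     (\<Sum>l<k. w l * (\<Sum>x\<in>C l. \<Sum>y\<in>C l. real CARD('d) * (1 - prod (?a x y) UNIV)))"
    unfolding E1 by (simp add: sum_distrib_left mult.left_commute)
  show ?thesis
  proof
    show "kmeans_cost (prod_kernel h) k C \<le> (\<Sum>i\<in>UNIV. kmeans_cost (coord_kernel h i) k C)"
      unfolding E1 E2
      by (intro sum_mono mult_left_mono w prod_ineq1) (auto simp: bnd)
    show "(\<Sum>i\<in>UNIV. kmeans_cost (coord_kernel h i) k C) \<le> real CARD('d) * kmeans_cost (prod_kernel h) k C"
      unfolding E2 E3
      by (intro sum_mono mult_left_mono w prod_ineq2) (auto simp: bnd)
  qed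
qed

end
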